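(* Let $N\ge 2$, let $e_{ij}\ge 0$ ($1\le i,j\le N$) be nonnegative similarity weights, let $a\in\{0,1\}^N$ be a treatment assignment, and let $y_1,\dots,y_N\in[0,1]$. Write $d_i=\sum_j e_{ij}$, $d_{\min}=\min_i d_i$, $e_{\mathrm{sum}}=\sum_{i,j}e_{ij}$, and $d_i(\mathrm{cut})=\sum_j \mathbb{1}(a_i\neq a_j)e_{ij}$, and assume $d_i(\mathrm{cut})>0$ for every $i$ (so that $d_i>0$ and $d_{\min}>0$). Define the counterfactual imputation weights $w_{ij}=\frac{\mathbb{1}(a_i\neq a_j)e_{ij}}{\sum_k \mathbb{1}(a_i\neq a_k)e_{ik}}$ and the oracle residuals $\epsilon_i=\left|y_i-\frac{\sum_j e_{ij}y_j}{d_i}\right|$. Then $$\sum_{i=1}^N\Big|\sum_{j} w_{ij}y_j-y_i\Big|\;\le\;\sum_{i=1}^N\epsilon_i+\frac{e_{\mathrm{sum}}-\sum_{i,j}\mathbb{1}(a_i\neq a_j)e_{ij}}{d_{\min}},$$ where all sums over $i,j$ range over ordered pairs in $\{1,\dots,N\}^2$.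
   Context: Units $i=1,\dots,N$ have covariates with pairwise similarities $e_{ij}$; $a_i=1$ denotes treatment and $a_i=0$ control. The quantity $\sum_j w_{ij}y_j$ is the estimate of unit $i$'s unobserved potential outcome obtained as a similarity-weighted average of the outcomes of units in the opposite treatment group. *)

theory Defs
  imports Main "HOL.Real"
begin

(* Units are indexed by {..<N} (0-based). e i j = similarity e_ij, a i = treatment indicator a_i \<in> {0,1}. *)

definition ind :: "bool \<Rightarrow> real" where
  "ind b = (if b then 1 else 0)"

definition deg :: "nat \<Rightarrow> (nat \<Rightarrow> nat \<Rightarrow> real) \<Rightarrow> nat \<Rightarrow> real" where
  "deg N e i = (\<Sum>j<N. e i j)"

definition dmin :: "nat \<Rightarrow> (nat \<Rightarrow> nat \<Rightarrow> real) \<Rightarrow> real" where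
  "dmin N e = Min ((\<lambda>i. deg N e i) ` {..<N})"

definition esum :: "nat \<Rightarrow> (nat \<Rightarrow> nat \<Rightarrow> real) \<Rightarrow> real" where
  "esum N e = (\<Sum>i<N. \<Sum>j<N. e i j)"

definition dcut :: "nat \<Rightarrow> (nat \<Rightarrow> nat \<Rightarrow> real) \<Rightarrow> (nat \<Rightarrow> bool) \<Rightarrow> nat \<Rightarrow> real" where
  "dcut N e a i = (\<Sum>j<N. ind (a i \<noteq> a j) * e i j)"

definition wgt :: "nat \<Rightarrow> (nat \<Rightarrow> nat \<Rightarrow> real) \<Rightarrow> (nat \<Rightarrow> bool) \<Rightarrow> nat \<Rightarrow> nat \<Rightarrow> real" where
  "wgt N e a i j = ind (a i \<noteq> a j) * e i j / (\<Sum>k<N. ind (a i \<noteq> a k) * e i k)"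

definition resid :: "nat \<Rightarrow> (nat \<Rightarrow> nat \<Rightarrow> real) \<Rightarrow> (nat \<Rightarrow> real) \<Rightarrow> nat \<Rightarrow> real" where
  "resid N e y i = \<bar>y i - (\<Sum>j<N. e i j * y j) / deg N e i\<bar>"

end

theory Submission
  imports Defs
begin

lemma key_alg:
  fixes S U c u :: real
  assumes "c > 0" "u \<ge> 0" "0 \<le> S" "S \<le> c" "0 \<le> U" "U \<le> u"
  shows "\<bar>S / c - (S + U) / (c + u)\<bar> \<le> u / (c + u)"
proof -
  have cd: "c + u > 0" using assms by linarith
  have eq: "S / c - (S + U) / (c + u) = (S * u - c * U) / (c * (c + u))"
  proof -
    have "S / c - (S + U) / (c + u) = (S*(c+u) - c*(S+U)) / (c * (c + u))"
      using assms cd by (simp add: diff_frac_eq)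
    also have "S*(c+u) - c*(S+U) = S * u - c * U" by (simp add: algebra_simps)
    finally show ?thesis .
  qed
  have b1: "S * u \<le> c * u" using assms by (simp add: mult_right_mono)
  have b2: "c * U \<le> c * u" using assms by (simp add: mult_left_mono)
  have b3: "0 \<le> S * u" "0 \<le> c * U" using assms by auto
  have "\<bar>S * u - c * U\<bar> \<le> c * u" using b1 b2 b3 by linarith
  hence "\<bar>S * u - c * U\<bar> / (c * (c + u)) \<le> c * u / (c * (c + u))"
    using assms cd by (intro divide_right_mono) auto
  also have "\<dots> = u / (c + u)" using assms by simp
  finally have "\<bar>S * u - c * U\<bar> / (c * (c + u)) \<le> u / (c + u)" .
  moreover have "\<bar>(S * u - c * U) / (c * (c + u))\<bar> = \<bar>S * u - c * U\<bar> / (c * (c + u))"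
  proof -
    have "c * (c + u) > 0" using assms cd by simp
    thus ?thesis by (simp add: abs_divide)
  qed
  ultimately show ?thesis using eq by metis
qed

theorem proposition2:
  fixes N :: nat and e :: "nat \<Rightarrow> nat \<Rightarrow> real" and a :: "nat \<Rightarrow> bool" and y :: "nat \<Rightarrow> real"
  assumes "N \<ge> 2"
    and "\<And>i j. i < N \<Longrightarrow> j < N \<Longrightarrow> e i j \<ge> 0"
    and "\<And>i. i < N \<Longrightarrow> 0 \<le> y i \<and> y i \<le> 1"
    and "\<And>i. i < N \<Longrightarrow> dcut N e a i > 0"
  shows "(\<Sum>i<N. \<bar>(\<Sum>j<N. wgt N e a i j * y j) - y i\<bar>)
           \<le> (\<Sum>i<N. resid N e y i)
              + (esum N e - (\<Sum>i<N. \<Sum>j<N. ind (a i \<noteq> a j) * e i j)) / dmin N e"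
proof -
  define u where "u i = (\<Sum>j<N. (1 - ind (a i \<noteq> a j)) * e i j)" for i
  have ind01: "0 \<le> ind b" "ind b \<le> 1" for b by (auto simp: ind_def)
  have degc: "deg N e i = dcut N e a i + u i" for i
    by (simp add: deg_def dcut_def u_def sum.distrib[symmetric] algebra_simps)
  have u0: "u i \<ge> 0" if "i < N" for i
    unfolding u_def using assms(2) that ind01 by (intro sum_nonneg) auto
  have dpos: "deg N e i > 0" if "i < N" for i using degc u0 assms(4) that
    by (metis add_pos_nonneg)
  have ne: "{..<N} \<noteq> {}" using assms(1) by (simp add: lessThan_empty_iff)
  have dminpos: "dmin N e > 0" unfolding dmin_def using dpos ne
    by (subst Min_gr_iff) auto
  have dminle: "dmin N e \<le> deg N e i" if "i < N" for i
    unfolding dmin_def using that by (intro Min_le) auto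
  have per: "\<bar>(\<Sum>j<N. wgt N e a i j * y j) - y i\<bar> \<le> resid N e y i + u i / dmin N e"
    if i: "i < N" for i
  proof -
    define c where "c = dcut N e a i"
    define S where "S = (\<Sum>j<N. ind (a i \<noteq> a j) * e i j * y j)"
    define U where "U = (\<Sum>j<N. (1 - ind (a i \<noteq> a j)) * e i j * y j)"
    have cpos: "c > 0" using assms(4) i c_def by auto
    have m: "(\<Sum>j<N. wgt N e a i j * y j) = S / c"
      unfolding wgt_def S_def c_def dcut_def by (simp add: sum_divide_distrib)
    have s: "(\<Sum>j<N. e i j * y j) = S + U"
      by (simp add: S_def U_def sum.distrib[symmetric] algebra_simps)
    have S0: "0 \<le> S" unfolding S_def using assms(2,3) i ind01
      by (intro sum_nonneg) (simp add: mult_nonneg_nonneg)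
    have Sc: "S \<le> c" unfolding S_def c_def dcut_def using assms(2,3) i ind01
      by (intro sum_mono) (simp add: mult_left_le mult_nonneg_nonneg)
    have U0: "0 \<le> U" unfolding U_def using assms(2,3) i ind01
      by (intro sum_nonneg) (simp add: mult_nonneg_nonneg)
    have Uu: "U \<le> u i" unfolding U_def u_def using assms(2,3) i ind01
      by (intro sum_mono) (simp add: mult_left_le mult_nonneg_nonneg)
    have k: "\<bar>S / c - (S + U) / (c + u i)\<bar> \<le> u i / (c + u i)"
      using key_alg[OF cpos u0[OF i] S0 Sc U0 Uu] .
    have k2: "u i / (c + u i) \<le> u i / dmin N e"
      using dminle[OF i] degc[of i] dminpos u0[OF i] c_def
      by (intro divide_left_mono) auto
    have r: "resid N e y i = \<bar>y i - (S + U) / (c + u i)\<bar>"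
      unfolding resid_def s degc c_def ..
    show ?thesis unfolding m r using k k2 by linarith
  qed
  have "(\<Sum>i<N. \<bar>(\<Sum>j<N. wgt N e a i j * y j) - y i\<bar>)
      \<le> (\<Sum>i<N. resid N e y i + u i / dmin N e)"
    using per by (intro sum_mono) auto
  also have "\<dots> = (\<Sum>i<N. resid N e y i) + (\<Sum>i<N. u i) / dmin N e"
    by (simp add: sum.distrib sum_divide_distrib)
  also have "(\<Sum>i<N. u i) = esum N e - (\<Sum>i<N. \<Sum>j<N. ind (a i \<noteq> a j) * e i j)"
    by (simp add: u_def esum_def sum_subtractf[symmetric] left_diff_distrib)
  finally show ?thesis .
qed

end
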